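(* Let $V$ be an $n$-dimensional vector space over a field $\mathbb{F}$ with an alternating bilinear form $\mathsf{s}$ of maximal rank, $G=\mathrm{Sp}(V)$, and $C=\{C_i\}_{i\in I}$ a chamber of $\Gamma(V)$. For $J\subseteq I$ let $R_J$ be the residue of type $J$ on $C$ and $P_J=\mathrm{Stab}_G(R_J)$. Then $P_J$ acts flag-transitively on $R_J$.
   Context: $\mathrm{Sp}(V)$: linear automorphisms of $V$ preserving $\mathsf{s}$. $\mathrm{Rad}(U)=U\cap U^\perp$; maximal rank means $\dim\mathrm{Rad}(V)\le1$. $\Gamma(V)$: for $i\in I=\{1,\dots,n-1\}$ the objects of type $i$ are the $i$-dimensional subspaces $U$ with $U\cap\mathrm{Rad}(V)=0$ and $\dim\mathrm{Rad}(U)\le1$; $X,Y$ incident iff $X=Y$, or $X\subseteq Y$ with $X\cap\mathrm{Rad}(Y)=0$, or vice versa. A chamber is a set of pairwise incident objects, one of each type. The residue $R_J$ of type $J$ on $C$ is the pre-geometry induced on the objects incident to all $C_i$, $i\in I\setminus J$, and not among them (so $P_J$ equals the stabilizer of the flag $\{C_i\}_{i\in I\setminus J}$). Flag-transitive on $R_J$: for each $K\subseteq J$, transitive on the flags of $R_J$ of type $K$. *)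

theory Defs
  imports Complex_Main
begin

text \<open>Setting: V is the whole type 'v, a vector space over the field 'a via scale;
  s is a bilinear form on V.  All notions below are relative to scale and s.\<close>

definition bilinear_form :: "('a::field \<Rightarrow> 'v::ab_group_add \<Rightarrow> 'v) \<Rightarrow> ('v \<Rightarrow> 'v \<Rightarrow> 'a) \<Rightarrow> bool" where
  "bilinear_form scale s \<longleftrightarrow>
     (\<forall>x. Vector_Spaces.linear scale (*) (\<lambda>y. s x y)) \<and>
     (\<forall>y. Vector_Spaces.linear scale (*) (\<lambda>x. s x y))"

definition alternating_form :: "('v \<Rightarrow> 'v \<Rightarrow> 'a::zero) \<Rightarrow> bool" where
  "alternating_form s \<longleftrightarrow> (\<forall>x. s x x = 0)"

definition perp :: "('v \<Rightarrow> 'v \<Rightarrow> 'a::zero) \<Rightarrow> 'v set \<Rightarrow> 'v set" where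
  "perp s U = {x. \<forall>u\<in>U. s x u = 0}"

definition Rad :: "('v \<Rightarrow> 'v \<Rightarrow> 'a::zero) \<Rightarrow> 'v set \<Rightarrow> 'v set" where
  "Rad s U = U \<inter> perp s U"

definition maximal_rank :: "('a::field \<Rightarrow> 'v::ab_group_add \<Rightarrow> 'v) \<Rightarrow> ('v \<Rightarrow> 'v \<Rightarrow> 'a) \<Rightarrow> bool" where
  "maximal_rank scale s \<longleftrightarrow> vector_space.dim scale (Rad s UNIV) \<le> 1"

definition Sp :: "('a::field \<Rightarrow> 'v::ab_group_add \<Rightarrow> 'v) \<Rightarrow> ('v \<Rightarrow> 'v \<Rightarrow> 'a) \<Rightarrow> ('v \<Rightarrow> 'v) set" where
  "Sp scale s = {g. Vector_Spaces.linear scale scale g \<and> bij g \<and> (\<forall>x y. s (g x) (g y) = s x y)}"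

definition types :: "('a::field \<Rightarrow> 'v::ab_group_add \<Rightarrow> 'v) \<Rightarrow> nat set" where
  "types scale = {1..vector_space.dim scale (UNIV::'v set) - 1}"

definition objects :: "('a::field \<Rightarrow> 'v::ab_group_add \<Rightarrow> 'v) \<Rightarrow> ('v \<Rightarrow> 'v \<Rightarrow> 'a) \<Rightarrow> 'v set set" where
  "objects scale s = {U. module.subspace scale U \<and>
      vector_space.dim scale U \<in> types scale \<and>
      U \<inter> Rad s UNIV = {0} \<and>
      vector_space.dim scale (Rad s U) \<le> 1}"

definition otype :: "('a::field \<Rightarrow> 'v::ab_group_add \<Rightarrow> 'v) \<Rightarrow> 'v set \<Rightarrow> nat" where
  "otype scale U = vector_space.dim scale U"

definition incident :: "('v \<Rightarrow> 'v \<Rightarrow> 'a::zero) \<Rightarrow> 'v::zero set \<Rightarrow> 'v set \<Rightarrow> bool" where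
  "incident s X Y \<longleftrightarrow> X = Y \<or> (X \<subseteq> Y \<and> X \<inter> Rad s Y = {0}) \<or> (Y \<subseteq> X \<and> Y \<inter> Rad s X = {0})"

definition flag_of_type :: "('a::field \<Rightarrow> 'v::ab_group_add \<Rightarrow> 'v) \<Rightarrow> ('v \<Rightarrow> 'v \<Rightarrow> 'a) \<Rightarrow> 'v set set \<Rightarrow> nat set \<Rightarrow> 'v set set \<Rightarrow> bool" where
  "flag_of_type scale s R K F \<longleftrightarrow> F \<subseteq> R \<and> (\<forall>X\<in>F. \<forall>Y\<in>F. incident s X Y) \<and>
     inj_on (otype scale) F \<and> otype scale ` F = K"

definition chamber :: "('a::field \<Rightarrow> 'v::ab_group_add \<Rightarrow> 'v) \<Rightarrow> ('v \<Rightarrow> 'v \<Rightarrow> 'a) \<Rightarrow> 'v set set \<Rightarrow> bool" where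
  "chamber scale s C \<longleftrightarrow> flag_of_type scale s (objects scale s) (types scale) C"

definition residue :: "('a::field \<Rightarrow> 'v::ab_group_add \<Rightarrow> 'v) \<Rightarrow> ('v \<Rightarrow> 'v \<Rightarrow> 'a) \<Rightarrow> 'v set set \<Rightarrow> nat set \<Rightarrow> 'v set set" where
  "residue scale s C J = {X \<in> objects scale s.
      (\<forall>Y\<in>C. otype scale Y \<in> types scale - J \<longrightarrow> incident s X Y) \<and>
      X \<notin> {Y\<in>C. otype scale Y \<in> types scale - J}}"

definition parabolic :: "('a::field \<Rightarrow> 'v::ab_group_add \<Rightarrow> 'v) \<Rightarrow> ('v \<Rightarrow> 'v \<Rightarrow> 'a) \<Rightarrow> 'v set set \<Rightarrow> nat set \<Rightarrow> ('v \<Rightarrow> 'v) set" where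
  "parabolic scale s C J = {g \<in> Sp scale s. \<forall>Y\<in>C. otype scale Y \<in> types scale - J \<longrightarrow> g ` Y = Y}"

definition flag_transitive :: "('a::field \<Rightarrow> 'v::ab_group_add \<Rightarrow> 'v) \<Rightarrow> ('v \<Rightarrow> 'v \<Rightarrow> 'a) \<Rightarrow> ('v \<Rightarrow> 'v) set \<Rightarrow> 'v set set \<Rightarrow> nat set \<Rightarrow> bool" where
  "flag_transitive scale s P R J \<longleftrightarrow>
     (\<forall>K\<subseteq>J. \<forall>F F'. flag_of_type scale s R K F \<and> flag_of_type scale s R K F' \<longrightarrow>
        (\<exists>g\<in>P. (\<lambda>X. g ` X) ` F = F'))"

end

theory Submission
  imports Defs
begin

definition om :: "nat \<Rightarrow> nat \<Rightarrow> 'a::field" where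
  "om a c = (if even a \<and> c = Suc a then 1 else if even c \<and> a = Suc c then -1 else 0)"

lemma om_antisym: "om c a = - (om a c :: 'a::field)"
  unfolding om_def by auto
lemma om_diag[simp]: "om a a = 0" unfolding om_def by auto
lemma om_even_lt: "c < 2*m \<Longrightarrow> om (2*m) c = 0"
proof -
  assume c: "c < 2*m"
  have "\<not> (even c \<and> 2*m = Suc c)" by presburger
  then show ?thesis using c unfolding om_def by auto
qed
lemma om_odd_lt: "c < 2*m \<Longrightarrow> om (Suc (2*m)) c = 0"
  unfolding om_def by auto
lemma om_odd_even: "om (Suc (2*m)) (2*m) = -1" unfolding om_def by auto

lemma two_ne_suc: "2*(t::nat) \<noteq> Suc (2*u)" by presburger
lemma om_ee[simp]: "om (2*t) (2*u) = 0" unfolding om_def using two_ne_suc by auto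
lemma om_oo[simp]: "om (Suc (2*t)) (Suc (2*u)) = 0" unfolding om_def by auto
lemma om_eo[simp]: "om (2*t) (Suc (2*u)) = (if t = u then 1 else 0)" unfolding om_def using two_ne_suc by auto
lemma om_oe[simp]: "om (Suc (2*t)) (2*u) = (if t = u then -1 else 0)" unfolding om_def using two_ne_suc by auto

locale sform = finite_dimensional_vector_space scale Basis
  for scale :: "'a::field \<Rightarrow> 'v::ab_group_add \<Rightarrow> 'v" (infixr "*s" 75) and Basis :: "'v set" +
  fixes s :: "'v \<Rightarrow> 'v \<Rightarrow> 'a"
  assumes bil: "bilinear_form scale s" and alt: "alternating_form s"
begin

lemma lin2: "Vector_Spaces.linear scale (*) (\<lambda>y. s x y)"
  using bil unfolding bilinear_form_def by blast
lemma lin1: "Vector_Spaces.linear scale (*) (\<lambda>x. s x y)"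
  using bil unfolding bilinear_form_def by blast

lemma sadd1: "s (x+y) z = s x z + s y z"
  using lin1[of z] unfolding Vector_Spaces.linear_iff by blast
lemma sadd2: "s z (x+y) = s z x + s z y"
  using lin2[of z] unfolding Vector_Spaces.linear_iff by blast
lemma sscale1: "s (c *s x) y = c * s x y"
  using lin1[of y] unfolding Vector_Spaces.linear_iff by blast
lemma sscale2: "s x (c *s y) = c * s x y"
  using lin2[of x] unfolding Vector_Spaces.linear_iff by blast
lemma szero1[simp]: "s 0 y = 0"
proof -
  have "s 0 y + s 0 y = s 0 y + 0" using sadd1[of 0 0 y] by simp
  then show ?thesis by (metis add_left_cancel)
qed
lemma szero2[simp]: "s y 0 = 0"
proof -
  have "s y 0 + s y 0 = s y 0 + 0" using sadd2[of y 0 0] by simp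
  then show ?thesis by (metis add_left_cancel)
qed
lemma sdiff1: "s (x - y) z = s x z - s y z"
  using sadd1[of "x - y" y z] by (simp add: algebra_simps)
lemma sdiff2: "s z (x - y) = s z x - s z y"
  using sadd2[of z "x - y" y] by (simp add: algebra_simps)
lemma salt[simp]: "s x x = 0"
  using alt unfolding alternating_form_def by blast
lemma santi: "s y x = - s x y"
proof -
  have "0 = s (x+y) (x+y)" by simp
  also have "\<dots> = (s x x + s x y) + (s y x + s y y)" by (simp only: sadd1 sadd2 add_ac)
  finally have "s y x + s x y = 0" by (simp add: add.commute)
  then show ?thesis by (simp add: eq_neg_iff_add_eq_0)
qed
lemma ssum1: "s (sum f A) y = (\<Sum>a\<in>A. s (f a) y)"
  by (induction A rule: infinite_finite_induct) (auto simp: sadd1)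
lemma ssum2: "s y (sum f A) = (\<Sum>a\<in>A. s y (f a))"
  by (induction A rule: infinite_finite_induct) (auto simp: sadd2)

lemma perp_span2:
  assumes "\<forall>b\<in>S. s x b = 0" "y \<in> span S" shows "s x y = 0"
  using assms(2)
proof (induction rule: span_induct)
  case base show ?case unfolding subspace_def by (auto simp: sadd2 sscale2)
next
  case (step z) then show ?case using assms(1) by auto
qed

lemma perp_span1:
  assumes "\<forall>b\<in>S. s b x = 0" "y \<in> span S" shows "s y x = 0"
  using perp_span2[of S x y] assms santi by (metis neg_equal_0_iff_equal)

definition gram :: "(nat \<Rightarrow> 'v) \<Rightarrow> nat \<Rightarrow> bool" where
  "gram b k \<longleftrightarrow> (\<forall>a<k. \<forall>c<k. s (b a) (b c) = om a c)"

definition proj :: "(nat \<Rightarrow> 'v) \<Rightarrow> nat \<Rightarrow> 'v \<Rightarrow> 'v" where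
  "proj b m y = (\<Sum>t<m. s y (b (2*t+1)) *s b (2*t) - s y (b (2*t)) *s b (2*t+1))"

lemma proj_span: "proj b m y \<in> span (b ` {..<2*m})"
  unfolding proj_def
  by (intro span_sum span_diff span_scale span_base) auto

lemma proj_perp:
  assumes g: "gram b (2*m)" and c: "c < 2*m"
  shows "s (proj b m y) (b c) = s y (b c)"
proof -
  define u where "u = c div 2"
  have u: "c = 2*u \<or> c = 2*u+1" "u < m" unfolding u_def using c by presburger+
  have hterm: "s y (b (Suc (2*t))) * s (b (2*t)) (b c) - s y (b (2*t)) * s (b (Suc (2*t))) (b c)
      = (if t = u then s y (b c) else 0)" if t: "t < m" for t
  proof -
    have "2*t < 2*m" "2*t+1 < 2*m" using t by auto
    then have "s (b (2*t)) (b c) = om (2*t) c" "s (b (2*t+1)) (b c) = om (2*t+1) c"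
      using g c unfolding gram_def by auto
    then show ?thesis using u(1) by auto
  qed
  have "s (proj b m y) (b c) = (\<Sum>t<m. s y (b (2*t+1)) * s (b (2*t)) (b c) - s y (b (2*t)) * s (b (2*t+1)) (b c))"
    unfolding proj_def by (simp add: ssum1 sdiff1 sscale1)
  also have "\<dots> = (\<Sum>t<m. (if t = u then s y (b c) else 0))"
    by (rule sum.cong) (auto simp: hterm)
  also have "\<dots> = s y (b c)" using u(2) by simp
  finally show ?thesis .
qed

lemma proj_perp':
  assumes g: "gram b (2*m)" and c: "c < 2*m"
  shows "s (y - proj b m y) (b c) = 0"
  using proj_perp[OF assms] by (simp add: sdiff1)

definition indep :: "(nat \<Rightarrow> 'v) \<Rightarrow> nat \<Rightarrow> bool" where
  "indep b k \<longleftrightarrow> independent (b ` {..<k}) \<and> inj_on b {..<k}"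

lemma img_upd: "(b((k::nat):=x)) ` {..<Suc k} = insert x (b ` {..<k})"
  by (auto simp: lessThan_Suc)
lemma img_upd_le: "j \<le> (k::nat) \<Longrightarrow> (b(k:=x)) ` {..<j} = b ` {..<j}"
  by (rule image_cong[OF refl]) auto

lemma dim_span_b: "indep b k \<Longrightarrow> dim (span (b ` {..<k})) = k"
  unfolding indep_def by (simp add: dim_eq_card_independent card_image)

lemma indep_ext:
  assumes "indep b k" "x \<notin> span (b ` {..<k})"
  shows "indep (b(k:=x)) (Suc k)"
proof -
  have "x \<notin> b ` {..<k}" by (meson assms(2) span_base)
  moreover have "inj_on (b(k:=x)) {..<k} = inj_on b {..<k}"
    by (rule inj_on_cong) simp
  then have "inj_on (b(k:=x)) {..<k}"
    using assms(1) unfolding indep_def by simp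
  moreover have "{..<k} - {k} = {..<k}" by auto
  ultimately have "inj_on (b(k:=x)) {..<Suc k}"
    unfolding lessThan_Suc by (simp add: inj_on_insert img_upd_le)
  moreover have "independent ((b(k:=x)) ` {..<Suc k})"
    unfolding img_upd using assms unfolding indep_def by (intro independent_insertI) simp_all
  ultimately show ?thesis unfolding indep_def by blast
qed

lemma gram_ext:
  assumes "gram b k" "\<forall>c<k. s x (b c) = om k c"
  shows "gram (b(k:=x)) (Suc k)"
  unfolding gram_def
proof (intro allI impI)
  fix a c assume a: "a < Suc k" and c: "c < Suc k"
  show "s ((b(k:=x)) a) ((b(k:=x)) c) = om a c"
  proof (cases "a = k")
    case True
    then show ?thesis using assms(2) c by (cases "c = k") auto
  next
    case False
    then have a': "a < k" using a by auto
    show ?thesis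
    proof (cases "c = k")
      case True
      have "s (b a) x = - s x (b a)" by (rule santi)
      also have "\<dots> = - om k a" using assms(2) a' by simp
      also have "\<dots> = om a k" using om_antisym[of a k] by metis
      finally show ?thesis using True \<open>a \<noteq> k\<close> by simp
    next
      case False
      then show ?thesis using assms(1) a' c unfolding gram_def by auto
    qed
  qed
qed

definition chainok :: "'v set set \<Rightarrow> bool" where
  "chainok G \<longleftrightarrow> UNIV \<in> G \<and> (\<forall>U\<in>G. subspace U \<and> dim (Rad s U) \<le> 1) \<and> inj_on dim G \<and>
     (\<forall>X\<in>G. \<forall>Y\<in>G. dim X < dim Y \<longrightarrow> X \<subseteq> Y \<and> X \<inter> Rad s Y = {0})"

definition Inv :: "'v set set \<Rightarrow> (nat \<Rightarrow> 'v) \<Rightarrow> nat \<Rightarrow> bool" where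
  "Inv G b d \<longleftrightarrow> gram b d \<and> indep b d \<and> (\<forall>U\<in>G. dim U \<le> d \<longrightarrow> U = span (b ` {..<dim U})) \<and>
     (\<forall>U\<in>G. d \<le> dim U \<longrightarrow> b ` {..<d} \<subseteq> U)"

definition Res :: "'v set set \<Rightarrow> (nat \<Rightarrow> 'v) \<Rightarrow> bool" where
  "Res G b \<longleftrightarrow> gram b dimension \<and> indep b dimension \<and> (\<forall>U\<in>G. U = span (b ` {..<dim U}))"

lemma dimUNIV: "dim (UNIV::'v set) = dimension" by (simp add: dimension_def)

lemma chain_le:
  assumes "chainok G" "X \<in> G" "Y \<in> G" "dim X \<le> dim Y" shows "X \<subseteq> Y"
proof (cases "dim X = dim Y")
  case True
  then have "X = Y" using assms unfolding chainok_def by (meson inj_onD)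
  then show ?thesis by simp
next
  case False
  then show ?thesis using assms unfolding chainok_def by auto
qed

lemma obtain_min:
  assumes "chainok G" "d < dimension"
  shows "\<exists>U\<in>G. d < dim U \<and> (\<forall>X\<in>G. d < dim X \<longrightarrow> dim U \<le> dim X)"
proof -
  have "UNIV \<in> G \<and> d < dim (UNIV::'v set)" using assms unfolding chainok_def by (simp add: dimension_def)
  from ex_has_least_nat[where P="\<lambda>X. X \<in> G \<and> d < dim X" and m=dim, OF this]
  show ?thesis by blast
qed

lemma exists_outside:
  assumes "span S \<subseteq> U" "dim (span S) < dim U" shows "\<exists>u\<in>U. u \<notin> span S"
proof (rule ccontr)
  assume "\<not> ?thesis"
  then have "U \<subseteq> span S" by blast
  then have "dim U \<le> dim (span S)" by (rule dim_subset)
  then show False using assms(2) by simp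
qed

lemma not_perp:
  assumes "x \<in> U" "x \<notin> Rad s U" shows "\<exists>y\<in>U. s x y \<noteq> 0"
  using assms unfolding Rad_def perp_def by auto

lemma step_common:
  assumes cg: "chainok G" and inv: "Inv G b (2*m)"
    and xU: "x \<in> Us" and xp: "\<forall>c<2*m. s x (b c) = 0" and xW: "x \<notin> span (b ` {..<2*m})"
    and UsG: "Us \<in> G" and WU: "span (b ` {..<2*m}) \<subseteq> Us"
    and above: "\<forall>X\<in>G. Suc (Suc (2*m)) \<le> dim X \<longrightarrow> Us \<subseteq> X"
    and yU: "y \<in> Us" and sxy: "s x y \<noteq> 0"
    and H: "\<forall>X\<in>G. dim X = Suc (2*m) \<longrightarrow> X = span (insert x (b ` {..<2*m}))"
  shows "\<exists>b'. Inv G b' (Suc (Suc (2*m)))"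
proof -
  let ?W = "span (b ` {..<2*m})"
  have g: "gram b (2*m)" and ind: "indep b (2*m)"
    and i3: "\<forall>U\<in>G. dim U \<le> 2*m \<longrightarrow> U = span (b ` {..<dim U})" using inv unfolding Inv_def by auto
  have subUs: "subspace Us" using cg UsG unfolding chainok_def by auto
  define y1 where "y1 = y - proj b m y"
  have pW: "proj b m y \<in> ?W" by (rule proj_span)
  have "proj b m y \<in> Us" using pW WU by blast
  then have y1U: "y1 \<in> Us" unfolding y1_def by (rule subspace_diff[OF subUs yU])
  have y1p: "\<forall>c<2*m. s y1 (b c) = 0" unfolding y1_def using proj_perp'[OF g] by auto
  have "s x (proj b m y) = 0" by (rule perp_span2[OF _ pW]) (use xp in auto)
  then have sxy1: "s x y1 = s x y" unfolding y1_def by (simp add: sdiff2)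
  define z where "z = inverse (s x y1) *s y1"
  have sxz: "s x z = 1" unfolding z_def using sxy sxy1 by (simp add: sscale2)
  have zp: "\<forall>c<2*m. s z (b c) = 0" unfolding z_def using y1p by (simp add: sscale1)
  have zU: "z \<in> Us" unfolding z_def using subUs y1U by (rule subspace_scale)
  define b1 where "b1 = b(2*m := x)"
  define b2 where "b2 = b1(Suc (2*m) := z)"
  have g1: "gram b1 (Suc (2*m))" unfolding b1_def by (rule gram_ext[OF g]) (use xp om_even_lt in auto)
  have g2: "gram b2 (Suc (Suc (2*m)))" unfolding b2_def
  proof (rule gram_ext[OF g1], intro allI impI)
    fix c assume c: "c < Suc (2*m)"
    show "s z (b1 c) = om (Suc (2*m)) c"
    proof (cases "c = 2*m")
      case True
      have "s z x = - s x z" by (rule santi)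
      then show ?thesis using sxz True by (simp add: b1_def om_odd_even)
    next
      case False
      then have "c < 2*m" using c by simp
      then show ?thesis using zp by (simp add: b1_def om_odd_lt)
    qed
  qed
  have ind1: "indep b1 (Suc (2*m))" unfolding b1_def by (rule indep_ext[OF ind xW])
  have img1: "b1 ` {..<Suc (2*m)} = insert x (b ` {..<2*m})" unfolding b1_def by (rule img_upd)
  have zS: "z \<notin> span (b1 ` {..<Suc (2*m)})"
  proof
    assume "z \<in> span (b1 ` {..<Suc (2*m)})"
    moreover have "\<forall>w\<in>b1 ` {..<Suc (2*m)}. s x w = 0" using xp unfolding img1 by auto
    ultimately have "s x z = 0" using perp_span2[of "b1 ` {..<Suc (2*m)}" x z] by blast
    then show False using sxz by simp
  qed
  have ind2: "indep b2 (Suc (Suc (2*m)))" unfolding b2_def by (rule indep_ext[OF ind1 zS])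
  have img2: "b2 ` {..<Suc (Suc (2*m))} = insert z (insert x (b ` {..<2*m}))"
    unfolding b2_def img_upd img1 ..
  have img2': "b2 ` {..<Suc (2*m)} = insert x (b ` {..<2*m})"
    unfolding b2_def img1[symmetric] by (rule img_upd_le) simp
  have lowimg: "b2 ` {..<j} = b ` {..<j}" if "j \<le> 2*m" for j
  proof -
    have "b2 ` {..<j} = b1 ` {..<j}" unfolding b2_def using that by (intro img_upd_le) simp
    also have "\<dots> = b ` {..<j}" unfolding b1_def using that by (intro img_upd_le) simp
    finally show ?thesis .
  qed
  have genUs: "b2 ` {..<Suc (Suc (2*m))} \<subseteq> Us" unfolding img2 using xU zU WU span_superset[of "b ` {..<2*m}"] by auto
  have spUs: "span (b2 ` {..<Suc (Suc (2*m))}) \<subseteq> Us" using genUs subUs by (rule span_minimal)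
  show ?thesis
  proof (rule exI[of _ b2], unfold Inv_def, intro conjI ballI impI)
    show "gram b2 (Suc (Suc (2*m)))" by (rule g2)
    show "indep b2 (Suc (Suc (2*m)))" by (rule ind2)
  next
    fix U assume UG: "U \<in> G" and dU: "dim U \<le> Suc (Suc (2*m))"
    consider "dim U \<le> 2*m" | "dim U = Suc (2*m)" | "dim U = Suc (Suc (2*m))" using dU by linarith
    then show "U = span (b2 ` {..<dim U})"
    proof cases
      case 1 then show ?thesis using i3 UG lowimg by auto
    next
      case 2
      then show ?thesis using H UG img2' by simp
    next
      case 3
      have sub: "subspace U" using cg UG unfolding chainok_def by auto
      have "Us \<subseteq> U" using above UG 3 by auto
      then have "span (b2 ` {..<dim U}) \<subseteq> U" using spUs 3 by auto
      moreover have "dim (span (b2 ` {..<dim U})) = dim U" using dim_span_b[OF ind2] 3 by simp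
      ultimately show ?thesis using subspace_dim_equal[of "span (b2 ` {..<dim U})" U] sub by auto
    qed
  next
    fix U assume UG: "U \<in> G" and dU: "Suc (Suc (2*m)) \<le> dim U"
    then have "Us \<subseteq> U" using above by auto
    then show "b2 ` {..<Suc (Suc (2*m))} \<subseteq> U" using genUs by auto
  qed
qed

lemma step:
  assumes cg: "chainok G" and inv: "Inv G b (2*m)" and n: "Suc (Suc (2*m)) \<le> dimension"
  shows "\<exists>b'. Inv G b' (Suc (Suc (2*m)))"
proof -
  let ?W = "span (b ` {..<2*m})"
  have g: "gram b (2*m)" and ind: "indep b (2*m)"
    and i4: "\<forall>U\<in>G. 2*m \<le> dim U \<longrightarrow> b ` {..<2*m} \<subseteq> U" using inv unfolding Inv_def by auto
  have dimW: "dim ?W = 2*m" by (rule dim_span_b[OF ind])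
  obtain U where UG: "U \<in> G" and dU: "2*m < dim U" and minU: "\<forall>X\<in>G. 2*m < dim X \<longrightarrow> dim U \<le> dim X"
    using obtain_min[OF cg, of "2*m"] n by auto
  have subU: "subspace U" using cg UG unfolding chainok_def by auto
  have WU: "?W \<subseteq> U" using i4 UG dU subU by (intro span_minimal) auto
  obtain u where uU: "u \<in> U" and uW: "u \<notin> ?W" using exists_outside[OF WU] dimW dU by auto
  define x1 where "x1 = u - proj b m u"
  have pu: "proj b m u \<in> ?W" by (rule proj_span)
  then have "proj b m u \<in> U" using WU by blast
  then have x1U: "x1 \<in> U" unfolding x1_def by (rule subspace_diff[OF subU uU])
  have x1p: "\<forall>c<2*m. s x1 (b c) = 0" unfolding x1_def using proj_perp'[OF g] by auto
  have x1W: "x1 \<notin> ?W"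
  proof
    assume "x1 \<in> ?W"
    then have "x1 + proj b m u \<in> ?W" using pu by (rule span_add)
    then show False using uW unfolding x1_def by simp
  qed
  have x10: "x1 \<noteq> 0" using x1W span_zero by auto
  define S1 where "S1 = span (insert x1 (b ` {..<2*m}))"
  have ind1: "indep (b(2*m := x1)) (Suc (2*m))" by (rule indep_ext[OF ind x1W])
  have dimS1: "dim S1 = Suc (2*m)" unfolding S1_def using dim_span_b[OF ind1] img_upd by metis
  have S1U: "S1 \<subseteq> U" unfolding S1_def using x1U WU span_superset[of "b ` {..<2*m}"] subU
    by (intro span_minimal) auto
  have WS1: "?W \<subseteq> S1" unfolding S1_def by (rule span_mono) auto
  show ?thesis
  proof (cases "dim U = Suc (2*m)")
    case True
    have US1: "U = S1" using subspace_dim_equal[of S1 U] S1U True dimS1 subU unfolding S1_def by auto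
    obtain U' where U'G: "U' \<in> G" and dU': "Suc (2*m) < dim U'"
      and minU': "\<forall>X\<in>G. Suc (2*m) < dim X \<longrightarrow> dim U' \<le> dim X"
      using obtain_min[OF cg, of "Suc (2*m)"] n by auto
    have UU': "U \<subseteq> U'" and rad: "U \<inter> Rad s U' = {0}"
      using cg UG U'G dU' True unfolding chainok_def by auto
    have "x1 \<notin> Rad s U'" using rad x1U x10 by auto
    then obtain y where yU': "y \<in> U'" and sxy: "s x1 y \<noteq> 0" using not_perp[of x1 U'] x1U UU' by auto
    show ?thesis
    proof (rule step_common[OF cg inv _ x1p x1W U'G _ _ yU' sxy])
      show "x1 \<in> U'" using x1U UU' by auto
      show "?W \<subseteq> U'" using WU UU' by auto
      show "\<forall>X\<in>G. Suc (Suc (2*m)) \<le> dim X \<longrightarrow> U' \<subseteq> X"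
        using minU' chain_le[OF cg U'G] by auto
      show "\<forall>X\<in>G. dim X = Suc (2*m) \<longrightarrow> X = span (insert x1 (b ` {..<2*m}))"
      proof (intro ballI impI)
        fix X assume "X \<in> G" "dim X = Suc (2*m)"
        then have "X = U" using cg UG True unfolding chainok_def by (metis inj_onD)
        then show "X = span (insert x1 (b ` {..<2*m}))" using US1 S1_def by simp
      qed
    qed
  next
    case False
    then have dU2: "Suc (Suc (2*m)) \<le> dim U" using dU by linarith
    obtain u2 where u2U: "u2 \<in> U" and u2S: "u2 \<notin> S1"
      using exists_outside[of "insert x1 (b ` {..<2*m})" U] S1U dimS1 dU2 unfolding S1_def by auto
    define x2 where "x2 = u2 - proj b m u2"
    have pu2: "proj b m u2 \<in> ?W" by (rule proj_span)
    then have "proj b m u2 \<in> U" using WU by blast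
    then have x2U: "x2 \<in> U" unfolding x2_def by (rule subspace_diff[OF subU u2U])
    have x2p: "\<forall>c<2*m. s x2 (b c) = 0" unfolding x2_def using proj_perp'[OF g] by auto
    have x2S: "x2 \<notin> S1"
    proof
      assume "x2 \<in> S1"
      moreover have "proj b m u2 \<in> S1" using pu2 WS1 by blast
      ultimately have "x2 + proj b m u2 \<in> S1" unfolding S1_def by (rule span_add)
      then show False using u2S unfolding x2_def by simp
    qed
    have x1S1: "x1 \<in> S1" unfolding S1_def by (rule span_base) simp
    have "x1 \<notin> Rad s U \<or> x2 \<notin> Rad s U"
    proof (rule ccontr)
      assume "\<not> ?thesis"
      then have sub: "{x2, x1} \<subseteq> Rad s U" by auto
      have "span {x1} \<subseteq> S1" unfolding S1_def by (rule span_mono) auto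
      then have "x2 \<notin> span {x1}" using x2S by auto
      moreover have "independent {x1}" using x10 by simp
      ultimately have indp: "independent {x2, x1}" by (rule independent_insertI)
      have "x2 \<noteq> x1" using x2S x1S1 by auto
      then have "card {x2, x1} = 2" by simp
      moreover have "card {x2, x1} \<le> dim (Rad s U)" by (rule independent_card_le_dim[OF sub indp])
      moreover have "dim (Rad s U) \<le> 1" using cg UG unfolding chainok_def by auto
      ultimately show False by simp
    qed
    then obtain x where xU: "x \<in> U" and xp: "\<forall>c<2*m. s x (b c) = 0" and xW: "x \<notin> ?W"
      and xR: "x \<notin> Rad s U"
      using x1U x1p x1W x2U x2p x2S WS1 by blast
    obtain y where yU: "y \<in> U" and sxy: "s x y \<noteq> 0" using not_perp[OF xU xR] by auto
    show ?thesis
    proof (rule step_common[OF cg inv xU xp xW UG WU _ yU sxy])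
      show "\<forall>X\<in>G. Suc (Suc (2*m)) \<le> dim X \<longrightarrow> U \<subseteq> X"
        using minU chain_le[OF cg UG] by auto
      show "\<forall>X\<in>G. dim X = Suc (2*m) \<longrightarrow> X = span (insert x (b ` {..<2*m}))"
        using minU dU2 by fastforce
    qed
  qed
qed

lemma final_odd:
  assumes cg: "chainok G" and inv: "Inv G b (2*m)" and n: "Suc (2*m) = dimension"
  shows "\<exists>b'. Res G b'"
proof -
  let ?W = "span (b ` {..<2*m})"
  have g: "gram b (2*m)" and ind: "indep b (2*m)"
    and i3: "\<forall>U\<in>G. dim U \<le> 2*m \<longrightarrow> U = span (b ` {..<dim U})" using inv unfolding Inv_def by auto
  have dimW: "dim ?W = 2*m" by (rule dim_span_b[OF ind])
  obtain u where uW: "u \<notin> ?W" using exists_outside[of "b ` {..<2*m}" UNIV] dimW n dimUNIV by auto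
  define x1 where "x1 = u - proj b m u"
  have pu: "proj b m u \<in> ?W" by (rule proj_span)
  have x1p: "\<forall>c<2*m. s x1 (b c) = 0" unfolding x1_def using proj_perp'[OF g] by auto
  have x1W: "x1 \<notin> ?W"
  proof
    assume "x1 \<in> ?W"
    then have "x1 + proj b m u \<in> ?W" using pu by (rule span_add)
    then show False using uW unfolding x1_def by simp
  qed
  define b1 where "b1 = b(2*m := x1)"
  have g1: "gram b1 (Suc (2*m))" unfolding b1_def by (rule gram_ext[OF g]) (use x1p om_even_lt in auto)
  have ind1: "indep b1 (Suc (2*m))" unfolding b1_def by (rule indep_ext[OF ind x1W])
  have full: "span (b1 ` {..<Suc (2*m)}) = UNIV"
    using subspace_dim_equal[of "span (b1 ` {..<Suc (2*m)})" UNIV] dim_span_b[OF ind1] n dimUNIV by auto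
  show ?thesis
  proof (rule exI[of _ b1], unfold Res_def n[symmetric], intro conjI ballI g1 ind1)
    fix U assume UG: "U \<in> G"
    have sub: "subspace U" using cg UG unfolding chainok_def by auto
    have "dim U \<le> Suc (2*m)" using dim_subset_UNIV n by metis
    then consider "dim U \<le> 2*m" | "dim U = Suc (2*m)" by linarith
    then show "U = span (b1 ` {..<dim U})"
    proof cases
      case 1
      then show ?thesis using i3 UG img_upd_le[of "dim U" "2*m" b x1] unfolding b1_def by auto
    next
      case 2
      then have "U = UNIV" using subspace_dim_equal[of U UNIV] sub n dimUNIV by auto
      then show ?thesis using full 2 by simp
    qed
  qed
qed

lemma exists_res:
  assumes cg: "chainok G" shows "\<exists>b. Res G b"
proof -
  have I: "2*m \<le> dimension \<Longrightarrow> \<exists>b. Inv G b (2*m)" for m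
  proof (induction m)
    case 0
    show ?case
    proof (rule exI[of _ "\<lambda>_. 0"], unfold Inv_def, intro conjI ballI impI)
      show "gram (\<lambda>_. 0) (2*0)" unfolding gram_def by simp
      show "indep (\<lambda>_. 0) (2*0)" unfolding indep_def by (simp add: independent_empty)
    next
      fix U assume UG: "U \<in> G" and d0: "dim U \<le> 2*0"
      have sub: "subspace U" using cg UG unfolding chainok_def by auto
      have d00: "dim U = 0" using d0 by linarith
      then have "U \<subseteq> {0}" by (simp only: dim_eq_0)
      moreover have "0 \<in> U" using sub by (rule subspace_0)
      ultimately have "U = {0}" by blast
      then show "U = span ((\<lambda>_. 0) ` {..<dim U})" using d00 by simp
    next
      fix U assume "U \<in> G" "2*0 \<le> dim U"
      show "(\<lambda>_. 0) ` {..<2*(0::nat)} \<subseteq> U" by simp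
    qed
  next
    case (Suc m)
    then obtain b where "Inv G b (2*m)" by auto
    from step[OF cg this] Suc.prems show ?case by simp
  qed
  show ?thesis
  proof (cases "even dimension")
    case True
    define m where "m = dimension div 2"
    have m: "dimension = 2*m" using True unfolding m_def by simp
    then have "2*m \<le> dimension" by simp
    then obtain b where inv: "Inv G b (2*m)" using I by blast
    have i3: "\<forall>U\<in>G. dim U \<le> 2*m \<longrightarrow> U = span (b ` {..<dim U})" using inv unfolding Inv_def by blast
    have "Res G b"
      unfolding Res_def
    proof (intro conjI ballI)
      show "gram b dimension" "indep b dimension" using inv m unfolding Inv_def by auto
      fix U assume UG: "U \<in> G"
      have "dim U \<le> 2*m" using dim_subset_UNIV[of U] m by simp
      then show "U = span (b ` {..<dim U})" using i3 UG by blast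
    qed
    then show ?thesis by blast
  next
    case False
    define m where "m = dimension div 2"
    have m: "dimension = Suc (2*m)" using False unfolding m_def by presburger
    then have "2*m \<le> dimension" by simp
    then obtain b where inv: "Inv G b (2*m)" using I by blast
    show ?thesis using final_odd[OF cg inv] m by simp
  qed
qed

lemma form_ext:
  assumes lg: "Vector_Spaces.linear scale scale g" and eq: "\<forall>a\<in>B. \<forall>c\<in>B. s (g a) (g c) = s a c"
    and x: "x \<in> span B" and y: "y \<in> span B"
  shows "s (g x) (g y) = s x y"
proof -
  have gadd: "g (u + v) = g u + g v" and gscale: "g (c *s u) = c *s g u" for u v c
    using lg unfolding Vector_Spaces.linear_iff by auto
  have g0: "g 0 = 0" using gscale[of 0 0] by simp
  have one: "s (g u) (g c) = s u c" if u: "u \<in> span B" and c: "c \<in> B" for u c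
    using u
  proof (induction rule: span_induct)
    case base show ?case unfolding subspace_def by (auto simp: gadd gscale sadd1 sscale1 g0)
  next
    case (step v) then show ?case using eq c by auto
  qed
  show ?thesis using y
  proof (induction rule: span_induct)
    case base show ?case unfolding subspace_def by (auto simp: gadd gscale sadd2 sscale2 g0)
  next
    case (step v) then show ?case using one[OF x] by auto
  qed
qed

lemma exists_iso:
  assumes r1: "Res G b" and r2: "Res G' b'"
  shows "\<exists>g\<in>Sp scale s. \<forall>k\<le>dimension. g ` span (b ` {..<k}) = span (b' ` {..<k})"
proof -
  interpret P: vector_space_pair scale scale by (intro vector_space_pair.intro vector_space_axioms)
  let ?n = dimension
  let ?B = "b ` {..<?n}" and ?B' = "b' ` {..<?n}"
  have indB: "independent ?B" and injb: "inj_on b {..<?n}" and gb1: "gram b ?n"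
    using r1 unfolding Res_def indep_def by auto
  have indB': "independent ?B'" and injb': "inj_on b' {..<?n}" and gb2: "gram b' ?n"
    using r2 unfolding Res_def indep_def by auto
  have spB: "span ?B = UNIV"
    using dim_span_b[of b ?n] r1 dim_eq_full[of ?B] unfolding Res_def by simp
  have spB': "span ?B' = UNIV"
    using dim_span_b[of b' ?n] r2 dim_eq_full[of ?B'] unfolding Res_def by simp
  define g where "g = P.construct ?B (\<lambda>v. b' (the_inv_into {..<?n} b v))"
  define h where "h = P.construct ?B' (\<lambda>v. b (the_inv_into {..<?n} b' v))"
  have lg: "Vector_Spaces.linear scale scale g" unfolding g_def by (rule P.linear_construct[OF indB])
  have lh: "Vector_Spaces.linear scale scale h" unfolding h_def by (rule P.linear_construct[OF indB'])
  have gb: "g (b a) = b' a" if "a < ?n" for a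
    unfolding g_def using that P.construct_basis[OF indB, of "b a"] the_inv_into_f_f[OF injb] by auto
  have hb: "h (b' a) = b a" if "a < ?n" for a
    unfolding h_def using that P.construct_basis[OF indB', of "b' a"] the_inv_into_f_f[OF injb'] by auto
  have hg: "h (g x) = x" for x
  proof -
    have "(h \<circ> g) x = id x"
    proof (rule P.linear_eq_on[of "h \<circ> g" id x ?B])
      show "Vector_Spaces.linear scale scale (h \<circ> g)" by (rule Vector_Spaces.linear_compose[OF lg lh])
      show "Vector_Spaces.linear scale scale id" by (rule linear_id)
      show "x \<in> span ?B" using spB by simp
    qed (auto simp: gb hb)
    then show ?thesis by simp
  qed
  have gh: "g (h x) = x" for x
  proof -
    have "(g \<circ> h) x = id x"
    proof (rule P.linear_eq_on[of "g \<circ> h" id x ?B'])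
      show "Vector_Spaces.linear scale scale (g \<circ> h)" by (rule Vector_Spaces.linear_compose[OF lh lg])
      show "Vector_Spaces.linear scale scale id" by (rule linear_id)
      show "x \<in> span ?B'" using spB' by simp
    qed (auto simp: gb hb)
    then show ?thesis by simp
  qed
  have bg: "bij g" by (rule o_bij[of h g]) (auto simp: hg gh fun_eq_iff)
  have isoB: "\<forall>a\<in>?B. \<forall>c\<in>?B. s (g a) (g c) = s a c"
    using gb1 gb2 gb unfolding gram_def by auto
  have iso: "s (g x) (g y) = s x y" for x y
    by (rule form_ext[OF lg isoB]) (simp_all add: spB)
  have "g \<in> Sp scale s" unfolding Sp_def using lg bg iso by auto
  moreover have "g ` span (b ` {..<k}) = span (b' ` {..<k})" if k: "k \<le> ?n" for k
  proof -
    have "g ` b ` {..<k} = b' ` {..<k}" unfolding image_image using k gb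
      by (intro image_cong) auto
    then show ?thesis using P.linear_span_image[OF lg, of "b ` {..<k}"] by simp
  qed
  ultimately show ?thesis by blast
qed

lemma incident_sym: "incident s' X Y \<longleftrightarrow> incident s' Y X"
  unfolding incident_def by auto

lemma incident_lt:
  assumes "incident s X Y" "dim X < dim Y" shows "X \<subseteq> Y \<and> X \<inter> Rad s Y = {0}"
proof -
  have "\<not> Y \<subseteq> X" using assms(2) dim_subset[of Y X] by auto
  moreover have "X \<noteq> Y" using assms(2) by auto
  ultimately show ?thesis using assms(1) unfolding incident_def by auto
qed

lemma chain_from_flag:
  assumes mr: "maximal_rank scale s" and ch: "chamber scale s C" and KJ: "K \<subseteq> J"
    and fl: "flag_of_type scale s (residue scale s C J) K F"
  shows "chainok (F \<union> {Y\<in>C. otype scale Y \<in> types scale - J} \<union> {UNIV})"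
proof -
  let ?C0 = "{Y\<in>C. otype scale Y \<in> types scale - J}"
  let ?G = "F \<union> ?C0 \<union> {UNIV}"
  have htyp: "types scale = {1..dimension - 1}" unfolding types_def using dimUNIV by simp
  have Fobj: "F \<subseteq> objects scale s" using fl unfolding flag_of_type_def residue_def by auto
  have Cobj: "C \<subseteq> objects scale s" using ch unfolding chamber_def flag_of_type_def by auto
  have obj: "X \<in> F \<union> ?C0 \<Longrightarrow> subspace X \<and> 1 \<le> dim X \<and> dim X < dimension \<and>
      X \<inter> Rad s UNIV = {0} \<and> dim (Rad s X) \<le> 1" for X
    using Fobj Cobj unfolding objects_def htyp by auto
  have FK: "dim X \<in> K" if "X \<in> F" for X using fl that unfolding flag_of_type_def otype_def by auto
  have injF: "inj_on dim F" using fl unfolding flag_of_type_def otype_def[abs_def] by auto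
  have injC: "inj_on dim C" using ch unfolding chamber_def flag_of_type_def otype_def[abs_def] by auto
  have incF: "\<forall>X\<in>F. \<forall>Y\<in>F. incident s X Y" using fl unfolding flag_of_type_def by auto
  have incC: "\<forall>X\<in>C. \<forall>Y\<in>C. incident s X Y" using ch unfolding chamber_def flag_of_type_def by auto
  have incFC: "incident s X Y" if "X \<in> F" "Y \<in> ?C0" for X Y
    using fl that unfolding flag_of_type_def residue_def by auto
  have inc: "incident s X Y" if "X \<in> F \<union> ?C0" "Y \<in> F \<union> ?C0" for X Y
    using that incF incC incFC incident_sym by blast
  have dUNIV: "dim (UNIV::'v set) = dimension" by (rule dimUNIV)
  show ?thesis unfolding chainok_def
  proof (intro conjI)
    show "UNIV \<in> ?G" by simp
  next
    show "\<forall>U\<in>?G. subspace U \<and> dim (Rad s U) \<le> 1"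
    proof
      fix U assume U: "U \<in> ?G"
      show "subspace U \<and> dim (Rad s U) \<le> 1"
      proof (cases "U = UNIV")
        case True then show ?thesis using mr unfolding maximal_rank_def by simp
      next
        case False then have "U \<in> F \<union> ?C0" using U by blast
        from obj[OF this] show ?thesis by blast
      qed
    qed
  next
    show "inj_on dim ?G"
    proof (rule inj_onI)
      fix X Y assume X: "X \<in> ?G" and Y: "Y \<in> ?G" and d: "dim X = dim Y"
      have lt: "dim Z < dimension" if "Z \<in> F \<union> ?C0" for Z using obj[OF that] by blast
      show "X = Y"
      proof (cases "X = UNIV \<or> Y = UNIV")
        case True
        show ?thesis
        proof (rule ccontr)
          assume ne: "X \<noteq> Y"
          show False
          proof (cases "X = UNIV")
            case True
            then have "Y \<in> F \<union> ?C0" using ne Y by blast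
            then have "dim Y < dimension" by (rule lt)
            then show False using d True dUNIV by simp
          next
            case False
            then have "X \<in> F \<union> ?C0" using X by blast
            moreover have "Y = UNIV" using False \<open>X = UNIV \<or> Y = UNIV\<close> by blast
            ultimately have "dim X < dimension" "dim Y = dimension" using lt dUNIV by auto
            then show False using d by simp
          qed
        qed
      next
        case False
        then have X': "X \<in> F \<union> ?C0" and Y': "Y \<in> F \<union> ?C0" using X Y by blast+
        have FC: False if "A \<in> F" "B \<in> ?C0" "dim A = dim B" for A B
        proof -
          have "dim A \<in> J" using FK[OF that(1)] KJ by blast
          moreover have "dim B \<notin> J" using that(2) unfolding otype_def by blast
          ultimately show False using that(3) by simp
        qed
        show ?thesis
        proof (cases "X \<in> F")
          case True
          show ?thesis
          proof (cases "Y \<in> F")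
            case True
            then show ?thesis using inj_onD[OF injF d \<open>X \<in> F\<close>] by blast
          next
            case False
            then have "Y \<in> ?C0" using Y' by blast
            then show ?thesis using FC \<open>X \<in> F\<close> d by blast
          qed
        next
          case False
          then have XC: "X \<in> ?C0" using X' by blast
          show ?thesis
          proof (cases "Y \<in> F")
            case True
            then show ?thesis using FC XC d by metis
          next
            case False
            then have "Y \<in> ?C0" using Y' by blast
            then show ?thesis using inj_onD[OF injC d] XC by blast
          qed
        qed
      qed
    qed
  next
    show "\<forall>X\<in>?G. \<forall>Y\<in>?G. dim X < dim Y \<longrightarrow> X \<subseteq> Y \<and> X \<inter> Rad s Y = {0}"
    proof (intro ballI impI)
    fix X Y assume X: "X \<in> ?G" and Y: "Y \<in> ?G" and d: "dim X < dim Y"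
    have XU: "X \<noteq> UNIV" using d dim_subset_UNIV[of Y] dUNIV by auto
    then have Xo: "X \<in> F \<union> ?C0" using X by auto
    show "X \<subseteq> Y \<and> X \<inter> Rad s Y = {0}"
    proof (cases "Y = UNIV")
      case True then show ?thesis using obj[OF Xo] by simp
    next
      case False
      then have "Y \<in> F \<union> ?C0" using Y by auto
      then show ?thesis using incident_lt[OF inc[OF Xo] d] by blast
    qed
  qed
  qed
qed

end

theorem corollary5p4:
  fixes scale :: "'a::field \<Rightarrow> 'v::ab_group_add \<Rightarrow> 'v"
    and basis :: "'v set"
    and s :: "'v \<Rightarrow> 'v \<Rightarrow> 'a"
    and C :: "'v set set"
    and J :: "nat set"
  assumes "finite_dimensional_vector_space scale basis"
    and "bilinear_form scale s"
    and "alternating_form s"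
    and "maximal_rank scale s"
    and "chamber scale s C"
    and "J \<subseteq> types scale"
  shows "flag_transitive scale s (parabolic scale s C J) (residue scale s C J) J"
proof -
  interpret sform scale basis s
    using assms(1,2,3) by (intro sform.intro sform_axioms.intro)
  show ?thesis
    unfolding flag_transitive_def
  proof (intro allI impI, elim conjE)
    fix K F F'
    assume KJ: "K \<subseteq> J" and fl: "flag_of_type scale s (residue scale s C J) K F"
      and fl': "flag_of_type scale s (residue scale s C J) K F'"
    let ?C0 = "{Y\<in>C. otype scale Y \<in> types scale - J}"
    let ?G = "F \<union> ?C0 \<union> {UNIV}" and ?G' = "F' \<union> ?C0 \<union> {UNIV}"
    have cg: "chainok ?G" by (rule chain_from_flag[OF assms(4) assms(5) KJ fl])
    have cg': "chainok ?G'" by (rule chain_from_flag[OF assms(4) assms(5) KJ fl'])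
    obtain b where rb: "Res ?G b" using exists_res[OF cg] by blast
    obtain b' where rb': "Res ?G' b'" using exists_res[OF cg'] by blast
    obtain g where gS: "g \<in> Sp scale s"
      and gim: "\<forall>k\<le>dimension. g ` span (b ` {..<k}) = span (b' ` {..<k})"
      using exists_iso[OF rb rb'] by blast
    have sp1: "\<forall>U\<in>?G. U = span (b ` {..<dim U})" using rb unfolding Res_def by blast
    have sp2: "\<forall>U\<in>?G'. U = span (b' ` {..<dim U})" using rb' unfolding Res_def by blast
    have gU: "g ` U = span (b' ` {..<dim U})" if U: "U \<in> ?G" for U
    proof -
      have "dim U \<le> dimension" by (rule dim_subset_UNIV)
      then have "g ` span (b ` {..<dim U}) = span (b' ` {..<dim U})" using gim by blast
      moreover have "U = span (b ` {..<dim U})" using sp1 U by blast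
      ultimately show ?thesis by simp
    qed
    have "g \<in> parabolic scale s C J"
      unfolding parabolic_def
    proof (intro CollectI conjI ballI impI gS)
      fix Y assume "Y \<in> C" "otype scale Y \<in> types scale - J"
      then have YC: "Y \<in> ?C0" by blast
      then have "g ` Y = span (b' ` {..<dim Y})" using gU by blast
      also have "\<dots> = Y" using sp2 YC by blast
      finally show "g ` Y = Y" .
    qed
    moreover have "(\<lambda>X. g ` X) ` F = F'"
    proof
      show "(\<lambda>X. g ` X) ` F \<subseteq> F'"
      proof
        fix Z assume "Z \<in> (\<lambda>X. g ` X) ` F"
        then obtain X where XF: "X \<in> F" and Z: "Z = g ` X" by blast
        have "otype scale X \<in> K" using fl XF unfolding flag_of_type_def by blast
        then have "otype scale X \<in> otype scale ` F'" using fl' unfolding flag_of_type_def by blast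
        then obtain X' where X'F: "X' \<in> F'" and dX: "dim X' = dim X" unfolding otype_def by auto
        have "Z = span (b' ` {..<dim X})" using Z gU XF by blast
        also have "\<dots> = X'"
        proof -
          have "X' = span (b' ` {..<dim X'})" using sp2 X'F by blast
          then show ?thesis using dX by simp
        qed
        finally show "Z \<in> F'" using X'F by simp
      qed
    next
      show "F' \<subseteq> (\<lambda>X. g ` X) ` F"
      proof
        fix X' assume X'F: "X' \<in> F'"
        have "otype scale X' \<in> K" using fl' X'F unfolding flag_of_type_def by blast
        then have "otype scale X' \<in> otype scale ` F" using fl unfolding flag_of_type_def by blast
        then obtain X where XF: "X \<in> F" and dX: "dim X = dim X'" unfolding otype_def by auto
        have "g ` X = span (b' ` {..<dim X})" using gU XF by blast
        also have "\<dots> = X'"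
        proof -
          have "X' = span (b' ` {..<dim X'})" using sp2 X'F by blast
          then show ?thesis using dX by simp
        qed
        finally show "X' \<in> (\<lambda>X. g ` X) ` F" using XF by blast
      qed
    qed
    ultimately show "\<exists>g\<in>parabolic scale s C J. (\<lambda>X. g ` X) ` F = F'" by blast
  qed
qed

end
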